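(* Let $\mu\in\mathbb{C}$ and let $\{S_n(z)\}_{n\ge -1}$ be a sequence of rational functions in $z$ satisfying $S_{-1}=S_0=1$ and the recurrence $$S_{n+1}S_{n-1}=-z\left[S_n\frac{d^2S_n}{dz^2}-\left(\frac{dS_n}{dz}\right)^2\right]-S_n\frac{dS_n}{dz}+(z+\mu)S_n^2,\qquad n\ge 0,$$ and suppose that the nonzero roots of each $S_n$ are simple. Then for every $N\in\mathbb{N}\cup\{0\}$, if $z=0$ is not a root of any $S_n(z)$ with $0\le n\le N$, the following hold: (a) $S_{N+1}(z)$ is a polynomial of degree $\tfrac12(N+1)(N+2)$; (b) $S_{N+1}(z)$ and $S_N(z)$ have no common root.
   Context: The functions $S_n(z)=S_n(z;\mu)$ (Umemura polynomials associated with the third Painlevé equation) are defined by the recurrence in the claim, each $S_{n+1}$ being a priori the rational function obtained by dividing the right-hand side by $S_{n-1}$. *)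

theory Defs
  imports "HOL-Computational_Algebra.Computational_Algebra" "HOL-Computational_Algebra.Field_as_Ring"
begin

text \<open>Each is written in lowest terms
(numerator and denominator coprime, monic denominator) via quot_of_fract.\<close>

type_synonym ratfun = "complex poly fract"

definition rnum :: "ratfun \<Rightarrow> complex poly" where
  "rnum f = fst (quot_of_fract f)"

definition rden :: "ratfun \<Rightarrow> complex poly" where
  "rden f = snd (quot_of_fract f)"

definition rderiv :: "ratfun \<Rightarrow> ratfun" where
  "rderiv f = Fract (pderiv (rnum f) * rden f - rnum f * pderiv (rden f)) (rden f * rden f)"

definition rZ :: ratfun where
  "rZ = to_fract [:0, 1:]"

definition rconst :: "complex \<Rightarrow> ratfun" where
  "rconst c = to_fract [:c:]"

definition is_root :: "ratfun \<Rightarrow> complex \<Rightarrow> bool" where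
  "is_root f z \<longleftrightarrow> poly (rnum f) z = 0"

definition is_polynomial :: "ratfun \<Rightarrow> bool" where
  "is_polynomial f \<longleftrightarrow> rden f = 1"

end

theory Submission
  imports Defs
begin

lemma rderiv_Fract:
  assumes q: "q \<noteq> 0"
  shows "rderiv (Fract p q) = Fract (pderiv p * q - p * pderiv q) (q * q)"
proof -
  obtain a b where ab: "quot_of_fract (Fract p q) = (a, b)" by (cases "quot_of_fract (Fract p q)") auto
  have b: "b \<noteq> 0" using snd_quot_of_fract_nonzero[of "Fract p q"] ab by simp
  have "Fract a b = Fract p q" using Fract_quot_of_fract[of "Fract p q"] ab by simp
  hence e: "a * q = p * b" by (simp add: eq_fract b q)
  have "pderiv (a*q) = pderiv (p*b)" using e by simp
  hence e': "pderiv a * q + a * pderiv q = pderiv p * b + p * pderiv b"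
    by (simp add: pderiv_mult algebra_simps)
  have "(pderiv a * b - a * pderiv b) * (q * q) - (pderiv p * q - p * pderiv q) * (b * b)
     = b * q * (pderiv a * q + a * pderiv q - (pderiv p * b + p * pderiv b))
       - (pderiv b * q + b * pderiv q) * (a * q - p * b)"
    by (simp add: algebra_simps)
  hence "(pderiv a * b - a * pderiv b) * (q * q) = (pderiv p * q - p * pderiv q) * (b * b)"
    using e e' by simp
  thus ?thesis by (simp add: rderiv_def rnum_def rden_def ab eq_fract b q)
qed

lemma rderiv_to_fract: "rderiv (to_fract p) = to_fract (pderiv p)"
  by (simp add: to_fract_def rderiv_Fract)

lemma rderiv_add: "rderiv (x + y) = rderiv x + rderiv y"
proof (cases x; cases y)
  fix a b c d :: "complex poly"
  assume x: "x = Fract a b" "b \<noteq> 0" and y: "y = Fract c d" "d \<noteq> 0"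
  have 1: "pderiv (a * d + c * b) * (b * d) - (a * d + c * b) * pderiv (b * d)
     = (pderiv a * b - a * pderiv b) * (d * d) + (pderiv c * d - c * pderiv d) * (b * b)"
    by (simp add: pderiv_add pderiv_mult algebra_simps)
  have 2: "b * d * (b * d) = b * b * (d * d)" by (simp add: algebra_simps)
  show ?thesis using x y by (simp add: rderiv_Fract 1 2)
qed

lemma rderiv_mult: "rderiv (x * y) = rderiv x * y + x * rderiv y"
proof (cases x; cases y)
  fix a b c d :: "complex poly"
  assume x: "x = Fract a b" "b \<noteq> 0" and y: "y = Fract c d" "d \<noteq> 0"
  define N1 where "N1 = pderiv (a * c) * (b * d) - a * c * pderiv (b * d)"
  have 1: "(pderiv a * b - a * pderiv b) * c * (b * (d * d)) + a * (pderiv c * d - c * pderiv d) * (b * b * d)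
     = (b * d) * N1"
    by (simp add: N1_def pderiv_add pderiv_mult algebra_simps)
  have 2: "b * b * d * (b * (d * d)) = (b * d) * (b * d * (b * d))" by (simp add: algebra_simps)
  have "rderiv x * y + x * rderiv y = Fract ((pderiv a * b - a * pderiv b) * c) (b * b * d)
       + Fract (a * (pderiv c * d - c * pderiv d)) (b * (d * d))"
    using x y by (simp add: rderiv_Fract)
  also have "\<dots> = Fract ((pderiv a * b - a * pderiv b) * c * (b * (d * d)) + a * (pderiv c * d - c * pderiv d) * (b * b * d)) (b * b * d * (b * (d * d)))"
    by (rule add_fract) (simp_all add: x y)
  also have "\<dots> = Fract ((b * d) * N1) ((b * d) * (b * d * (b * d)))"
    by (simp only: 1 2)
  also have "\<dots> = Fract N1 (b * d * (b * d))" using x y by (simp add: mult_fract_cancel)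
  finally show ?thesis using x y by (simp add: rderiv_Fract N1_def)
qed

lemma rderiv_1[simp]: "rderiv 1 = 0"
  using rderiv_to_fract[of 1] by simp

lemma rderiv_0[simp]: "rderiv 0 = 0"
  using rderiv_to_fract[of 0] by simp

lemma rderiv_minus: "rderiv (- x) = - rderiv x"
  using rderiv_add[of x "-x"] by (simp add: add_eq_0_iff)

lemma rderiv_diff: "rderiv (x - y) = rderiv x - rderiv y"
  using rderiv_add[of x "-y"] by (simp add: rderiv_minus)

lemma rderiv_of_int[simp]: "rderiv (of_int n) = 0"
proof (induction n rule: int_induct[where k=0])
  case base then show ?case by simp
next
  case (step1 i) then show ?case by (simp add: rderiv_add)
next
  case (step2 i) then show ?case by (simp add: rderiv_diff)
qed

lemma rderiv_rZ[simp]: "rderiv rZ = 1"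
  by (simp add: rZ_def rderiv_to_fract pderiv_pCons pCons_one)

lemma rderiv_rconst[simp]: "rderiv (rconst c) = 0"
  by (simp add: rconst_def rderiv_to_fract pderiv_pCons)

lemma rderiv_inverse: "x \<noteq> 0 \<Longrightarrow> rderiv (inverse x) = - rderiv x / x^2"
proof -
  assume x: "x \<noteq> 0"
  have "rderiv (x * inverse x) = 0" using x by simp
  hence "rderiv x * inverse x + x * rderiv (inverse x) = 0" by (simp add: rderiv_mult)
  thus ?thesis using x by (simp add: field_simps power2_eq_square) (metis add_eq_0_iff mult.commute)
qed

lemma rderiv_divide: "y \<noteq> 0 \<Longrightarrow> rderiv (x / y) = (rderiv x * y - x * rderiv y) / y^2"
proof -
  assume y: "y \<noteq> 0"
  have "rderiv (x / y) = rderiv x * inverse y + x * (- rderiv y / y^2)"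
    by (simp only: divide_inverse rderiv_mult rderiv_inverse[OF y])
  also have "\<dots> = (rderiv x * y - x * rderiv y) / y^2"
    using y by (simp add: field_simps power2_eq_square)
  finally show ?thesis .
qed



lemma step_lemma:
  fixes Lm L0 L1 L2 g h :: ratfun and c :: int
  assumes g: "g = rZ + rconst \<mu> - L0 - rZ * rderiv L0"
    and h: "h = rZ + rconst \<mu> - L1 - rZ * rderiv L1"
    and dg: "rderiv g = g * (L1 + Lm - 2*L0)"
    and dh: "rderiv h = h * (L2 + L0 - 2*L1)"
    and R: "(L1 - Lm) * g = of_int c"
    and H: "rderiv L1 + rderiv L0 + (L1 - L0)^2 = 0"
    and g0: "g \<noteq> 0" and h0: "h \<noteq> 0"
  shows "(L2 - L0) * h = of_int (c + 2) \<and> rderiv L2 + rderiv L1 + (L2 - L1)^2 = 0"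
proof -
  define Y where "Y = L1 - L0"
  have dY: "rderiv Y = rderiv L1 - rderiv L0" by (simp add: Y_def rderiv_diff)
  have ddY: "rderiv (rderiv Y) = rderiv (rderiv L1) - rderiv (rderiv L0)" by (simp add: dY rderiv_diff)
  have E1: "2*Y*g = of_int c + rderiv g" using dg R unfolding Y_def by algebra
  have E2: "h = g - Y - rZ * rderiv Y" using g h dY unfolding Y_def by algebra
  have E3: "rderiv h = rderiv g - 2 * rderiv Y - rZ * rderiv (rderiv Y)"
    by (subst E2) (simp add: rderiv_diff rderiv_mult)
  have E4: "rderiv g = 1 - 2 * rderiv L0 - rZ * rderiv (rderiv L0)"
    by (subst g) (simp add: rderiv_diff rderiv_add rderiv_mult)
  have H': "rderiv (rderiv L1) + rderiv (rderiv L0) + 2 * Y * rderiv Y = 0"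
  proof -
    have "rderiv L1 + rderiv L0 + Y * Y = 0" using H by (simp add: Y_def power2_eq_square)
    hence "rderiv (rderiv L1 + rderiv L0 + Y * Y) = 0" by simp
    hence "rderiv (rderiv L1) + rderiv (rderiv L0) + (rderiv Y * Y + Y * rderiv Y) = 0"
      by (simp only: rderiv_add rderiv_mult)
    thus ?thesis by algebra
  qed
  have HY: "rderiv L1 + rderiv L0 + Y^2 = 0" using H Y_def by simp
  have "rderiv h + 2 * Y * h = of_int c + 2"
    using E1 E2 E3 E4 H' HY ddY dY by algebra
  moreover have "(L2 - L0) * h = rderiv h + 2 * Y * h" using dh unfolding Y_def by algebra
  ultimately have G1: "(L2 - L0) * h = of_int (c + 2)" by simp
  have L2e: "L2 - L0 = of_int (c + 2) / h" using G1 h0 by (simp add: field_simps)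
  have a: "rderiv (L2 - L0) * h^2 = - of_int (c + 2) * rderiv h"
  proof -
    have dC: "rderiv (of_int (c+2) :: ratfun) = 0" by (rule rderiv_of_int)
    show ?thesis using h0 by (simp only: L2e rderiv_divide[OF h0] dC) (simp add: field_simps power2_eq_square)
  qed
  have b: "rderiv (L2 - L0) = rderiv L2 - rderiv L0" by (simp add: rderiv_diff)
  have "(rderiv L2 + rderiv L1 + (L2 - L1)^2) * h^2 = 0"
    using a b G1 dh H by algebra
  hence "rderiv L2 + rderiv L1 + (L2 - L1)^2 = 0" using h0 by simp
  with G1 show ?thesis by simp
qed

lemma TL_lemma:
  fixes s s1 sm :: ratfun
  assumes s0: "s \<noteq> 0"
    and rec: "s1 * sm = - rZ * (s * rderiv (rderiv s) - (rderiv s)^2) - s * rderiv s + (rZ + rconst \<mu>) * s^2"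
  shows "s1 * sm / s^2 = rZ + rconst \<mu> - rderiv s / s - rZ * rderiv (rderiv s / s)"
proof -
  have "rderiv (rderiv s / s) = (rderiv (rderiv s) * s - rderiv s * rderiv s) / s^2"
    using s0 by (simp add: rderiv_divide)
  hence D2: "s^2 * rderiv (rderiv s / s) = rderiv (rderiv s) * s - rderiv s * rderiv s"
    using s0 by simp
  have q: "rderiv s / s * s^2 = rderiv s * s" using s0 by (simp add: power2_eq_square)
  have "s1 * sm = (rZ + rconst \<mu> - rderiv s / s - rZ * rderiv (rderiv s / s)) * s^2"
    using rec D2 q by algebra
  thus ?thesis using s0 by simp
qed

lemma A_lemma:
  fixes a b s :: ratfun
  assumes "a \<noteq> 0" "b \<noteq> 0" "s \<noteq> 0"
  shows "rderiv (a * b / s^2) = (a * b / s^2) * (rderiv a / a + rderiv b / b - 2 * (rderiv s / s))"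
  using assms by (simp add: rderiv_divide rderiv_mult power2_eq_square field_simps)

lemma to_fract_of_int: "(of_int m :: ratfun) = to_fract (of_int m)"
  by (induction m rule: int_induct[where k=0]) simp_all

definition Dp :: "complex \<Rightarrow> complex poly \<Rightarrow> complex poly" where
  "Dp \<mu> B = - [:0, 1:] * (B * pderiv (pderiv B) - (pderiv B)^2) - B * pderiv B + ([:0, 1:] + [:\<mu>:]) * B^2"

lemma Dp_to_fract:
  "- rZ * (to_fract B * rderiv (rderiv (to_fract B)) - (rderiv (to_fract B))^2)
        - to_fract B * rderiv (to_fract B) + (rZ + rconst \<mu>) * (to_fract B)^2 = to_fract (Dp \<mu> B)"
  by (simp only: Dp_def rZ_def rconst_def rderiv_to_fract power2_eq_square to_fract_mult to_fract_add
      to_fract_diff to_fract_uminus)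

lemma degree_Dp:
  assumes "B \<noteq> 0"
  shows "degree (Dp \<mu> B) = 2 * degree B + 1"
proof -
  define d where "d = degree B"
  define X where "X = ([:0, 1:] + [:\<mu>:]) * B^2"
  define Y where "Y = - [:0, 1:] * (B * pderiv (pderiv B) - (pderiv B)^2) - B * pderiv B"
  have lin: "[:0, 1:] + [:\<mu>:] = [:\<mu>, 1:]" by simp
  have "degree ([:\<mu>, 1:] * B^2) = degree [:\<mu>, 1:] + degree (B^2)"
    by (rule degree_mult_eq) (use assms in auto)
  hence dX: "degree X = 2 * d + 1"
    unfolding X_def lin using assms by (simp add: degree_power_eq d_def)
  have dY: "degree Y < 2 * d + 1"
  proof (cases "d = 0")
    case True
    then obtain c where "B = [:c:]" by (metis True d_def degree_eq_zeroE)
    hence "Y = 0" by (simp add: Y_def pderiv_pCons)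
    thus ?thesis by simp
  next
    case False
    have a: "degree (B * pderiv (pderiv B)) \<le> 2 * d - 1"
      using degree_mult_le[of B "pderiv (pderiv B)"] by (simp add: degree_pderiv d_def)
    have b: "degree ((pderiv B)^2) \<le> 2 * d - 1"
      using degree_mult_le[of "pderiv B" "pderiv B"] by (simp add: degree_pderiv d_def power2_eq_square)
    have c: "degree (B * pderiv (pderiv B) - (pderiv B)^2) \<le> 2 * d - 1"
      using a b degree_diff_le by blast
    have e: "degree (- [:0, 1:] * (B * pderiv (pderiv B) - (pderiv B)^2)) \<le> 2 * d"
      using degree_mult_le[of "- [:0, 1:]" "B * pderiv (pderiv B) - (pderiv B)^2"] c False by simp
    have f: "degree (B * pderiv B) \<le> 2 * d"
      using degree_mult_le[of B "pderiv B"] by (simp add: degree_pderiv d_def)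
    have "degree Y \<le> 2 * d" unfolding Y_def using e f degree_diff_le by blast
    thus ?thesis using False by linarith
  qed
  have "Dp \<mu> B = Y + X" by (simp add: Dp_def X_def Y_def)
  thus ?thesis using dX dY by (simp add: degree_add_eq_right d_def)
qed

lemma poly_step:
  fixes A E F :: "complex poly" and c :: ratfun
  assumes A0: "A \<noteq> 0"
    and T: "c * to_fract A = to_fract E"
    and R: "rderiv c * to_fract A - c * to_fract (pderiv A) = to_fract F"
    and sq: "\<And>z. poly A z = 0 \<Longrightarrow> order z A = 1"
  shows "rden c = 1"
proof -
  obtain P Q where PQ: "quot_of_fract c = (P, Q)" by (cases "quot_of_fract c") auto
  have Q0: "Q \<noteq> 0" using snd_quot_of_fract_nonzero[of c] PQ by simp
  have cPQ: "c = Fract P Q" using Fract_quot_of_fract[of c] PQ by simp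
  have cop: "coprime P Q" using coprime_quot_of_fract[of c] PQ by simp
  have nQ: "normalize Q = Q" using normalize_snd_quot_of_fract[of c] PQ by simp
  have eT: "P * A = E * Q" using T Q0 by (simp add: cPQ to_fract_def eq_fract)
  have "Fract ((pderiv P * Q - P * pderiv Q) * A * Q - P * pderiv A * (Q * Q)) (Q * Q * Q) = Fract F 1"
    using R Q0 by (simp add: cPQ to_fract_def rderiv_Fract algebra_simps)
  hence "((pderiv P * Q - P * pderiv Q) * A * Q - P * pderiv A * (Q * Q)) = F * (Q * Q * Q)"
    using Q0 by (simp add: eq_fract)
  hence "Q * ((pderiv P * Q - P * pderiv Q) * A - P * pderiv A * Q) = Q * (F * (Q * Q))"
    by (simp add: algebra_simps)
  hence eR: "(pderiv P * Q - P * pderiv Q) * A - P * pderiv A * Q = F * (Q * Q)"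
    using Q0 by simp
  have "Q = 1"
  proof (rule ccontr)
    assume Q1: "Q \<noteq> 1"
    have "degree Q \<noteq> 0"
    proof
      assume "degree Q = 0"
      hence "is_unit Q" using Q0 is_unit_iff_degree by blast
      hence "normalize Q = 1" by (rule is_unit_normalize)
      with nQ Q1 show False by simp
    qed
    then obtain z where zQ: "poly Q z = 0" using alg_closed_imp_poly_has_root by blast
    have Pz: "poly P z \<noteq> 0" using coprime_poly_0[OF cop, of z] zQ by blast
    have "Q dvd P * A" using eT by simp
    hence "Q dvd A" using cop by (simp add: coprime_dvd_mult_right_iff coprime_commute)
    then obtain M where AM: "A = Q * M" by blast
    have M0: "M \<noteq> 0" using A0 AM by simp
    have Az: "poly A z = 0" using AM zQ by simp
    have oA: "order z A = 1" using sq[OF Az] .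
    have oAsum: "order z A = order z Q + order z M" using A0 AM by (simp add: order_mult)
    have oQ: "order z Q \<noteq> 0" using zQ Q0 order_root by blast
    have oQ1: "order z Q = 1" and oM: "order z M = 0" using oA oAsum oQ by auto
    have Mz: "poly M z \<noteq> 0" using oM M0 order_root by blast
    have "order z Q = Suc (order z (pderiv Q))" using order_pderiv[OF Q0 zQ] .
    hence "order z (pderiv Q) = 0" using oQ1 by simp
    moreover have "pderiv Q \<noteq> 0"
    proof
      assume "pderiv Q = 0"
      then obtain h where "Q = [:h:]" using pderiv_iszero by blast
      hence "degree Q = 0" by simp
      with \<open>degree Q \<noteq> 0\<close> show False by simp
    qed
    ultimately have Q'z: "poly (pderiv Q) z \<noteq> 0" using order_root by blast
    have "Q * ((pderiv P * Q - P * pderiv Q) * M - P * (pderiv Q * M + Q * pderiv M)) = Q * (F * Q)"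
      using eR unfolding AM by (simp add: pderiv_mult algebra_simps)
    hence "(pderiv P * Q - P * pderiv Q) * M - P * (pderiv Q * M + Q * pderiv M) = F * Q"
      using Q0 by simp
    hence "poly ((pderiv P * Q - P * pderiv Q) * M - P * (pderiv Q * M + Q * pderiv M)) z = poly (F * Q) z"
      by simp
    hence "- 2 * poly P z * poly (pderiv Q) z * poly M z = 0" using zQ by (simp add: algebra_simps)
    thus False using Pz Q'z Mz by simp
  qed
  thus ?thesis by (simp add: rden_def PQ)
qed

theorem theorem3p2:
  fixes \<mu> :: complex and S :: "int \<Rightarrow> ratfun" and N :: nat
  assumes init: "S (-1) = 1" "S 0 = 1"
    and recur: "\<And>n. n \<ge> 0 \<Longrightarrow>
      S (n + 1) * S (n - 1) =
        - rZ * (S n * rderiv (rderiv (S n)) - (rderiv (S n))\<^sup>2)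
        - S n * rderiv (S n) + (rZ + rconst \<mu>) * (S n)\<^sup>2"
    and simple: "\<And>n z. n \<ge> -1 \<Longrightarrow> z \<noteq> 0 \<Longrightarrow> is_root (S n) z \<Longrightarrow> order z (rnum (S n)) = 1"
    and nonzero0: "\<And>n. 0 \<le> n \<Longrightarrow> n \<le> int N \<Longrightarrow> \<not> is_root (S n) 0"
  shows "is_polynomial (S (int N + 1))
         \<and> degree (rnum (S (int N + 1))) = (N + 1) * (N + 2) div 2
         \<and> \<not> (\<exists>z. is_root (S (int N + 1)) z \<and> is_root (S (int N)) z)"
proof -
  define L where "L = (\<lambda>k. rderiv (S k) / S k)"
  define hh where "hh = (\<lambda>k. S (k + 1) * S (k - 1) / (S k)^2)"
  define Rk where "Rk = (\<lambda>k::int. (L (k + 1) - L (k - 1)) * hh k = of_int (2 * k + 1))"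
  define Hk where "Hk = (\<lambda>k::int. rderiv (L (k + 1)) + rderiv (L k) + (L (k + 1) - L k)^2 = 0)"
  define good where "good = (\<lambda>j::int. is_polynomial (S j) \<and> S j \<noteq> 0
      \<and> 2 * int (degree (rnum (S j))) = j * (j + 1))"
  have polyS: "S j = to_fract (rnum (S j))" if "good j" for j
    using that unfolding good_def is_polynomial_def rden_def rnum_def
    by (simp add: to_fract_quot_of_fract)
  have sqA: "poly (rnum (S j)) z = 0 \<Longrightarrow> order z (rnum (S j)) = 1"
    if "-1 \<le> j" "j \<le> int N" for j z
  proof -
    assume r: "poly (rnum (S j)) z = 0"
    show ?thesis
    proof (cases "z = 0")
      case True
      show ?thesis
      proof (cases "j = -1")
        case True
        with r show ?thesis by (simp add: init rnum_def)
      next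
        case False
        with that r \<open>z = 0\<close> nonzero0[of j] show ?thesis by (simp add: is_root_def)
      qed
    next
      case False
      with that r simple[of j z] show ?thesis by (simp add: is_root_def)
    qed
  qed
  have recD: "S (j + 1) * S (j - 1) = to_fract (Dp \<mu> (rnum (S j)))" if "0 \<le> j" "good j" for j
    using recur[OF that(1)] Dp_to_fract[of "rnum (S j)" \<mu>] polyS[OF that(2)] by simp
  have TL: "hh j = rZ + rconst \<mu> - L j - rZ * rderiv (L j)" if "0 \<le> j" "S j \<noteq> 0" for j
    unfolding hh_def L_def by (rule TL_lemma[OF that(2) recur[OF that(1)]])
  have AL: "rderiv (hh j) = hh j * (L (j + 1) + L (j - 1) - 2 * L j)"
    if "S (j + 1) \<noteq> 0" "S (j - 1) \<noteq> 0" "S j \<noteq> 0" for j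
    unfolding hh_def L_def using A_lemma[OF that] by simp
  have hh0: "hh j \<noteq> 0" if "S (j + 1) \<noteq> 0" "S (j - 1) \<noteq> 0" "S j \<noteq> 0" for j
    unfolding hh_def using that by simp
  have inv: "good (int k - 1) \<and> good (int k) \<and> good (int k + 1) \<and> Rk (int k) \<and> Hk (int k)"
    if "k \<le> N" for k
    using that
  proof (induction k)
    case 0
    define w where "w = rZ + rconst \<mu>"
    have w: "w = to_fract [:\<mu>, 1:]" by (simp add: w_def rZ_def rconst_def flip: to_fract_add)
    have w0: "w \<noteq> 0" by (simp add: w)
    have dw: "rderiv w = 1" by (simp add: w_def rderiv_add)
    have S1: "S 1 = w" using recur[of 0] by (simp add: init w_def)
    have gm: "good (-1)" by (simp add: good_def init is_polynomial_def rden_def rnum_def)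
    have g0: "good 0" by (simp add: good_def init is_polynomial_def rden_def rnum_def)
    have g1: "good 1" using S1 w0
      by (simp add: good_def w is_polynomial_def rden_def rnum_def)
    have L0: "L 0 = 0" and Lm: "L (-1) = 0" by (simp_all add: L_def init)
    have L1: "L 1 = 1 / w" by (simp add: L_def S1 dw)
    have h0: "hh 0 = w" by (simp add: hh_def S1 init)
    have R0: "Rk 0" using w0 by (simp add: Rk_def L1 Lm h0)
    have "rderiv (1 / w) = - 1 / w^2" using w0 by (simp add: rderiv_divide dw)
    hence H0: "Hk 0" using w0 by (simp add: Hk_def L1 L0 power2_eq_square field_simps)
    show ?case using gm g0 g1 R0 H0 by simp
  next
    case (Suc k)
    define n where "n = int k"
    have IH: "good (n - 1)" "good n" "good (n + 1)" "Rk n" "Hk n"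
      using Suc by (simp_all add: n_def)
    have n0: "0 \<le> n" and nN: "n + 1 \<le> int N" using Suc(2) by (simp_all add: n_def)
    have nzm: "S (n - 1) \<noteq> 0" and nz0: "S n \<noteq> 0" and nz1: "S (n + 1) \<noteq> 0"
      using IH by (simp_all add: good_def)
    define A where "A = rnum (S n)"
    define B where "B = rnum (S (n + 1))"
    have SA: "S n = to_fract A" using polyS[OF IH(2)] by (simp add: A_def)
    have SB: "S (n + 1) = to_fract B" using polyS[OF IH(3)] by (simp add: B_def)
    have A0: "A \<noteq> 0" using nz0 SA by auto
    have B0: "B \<noteq> 0" using nz1 SB by auto
    have dDp: "degree (Dp \<mu> B) = 2 * degree B + 1" using degree_Dp[OF B0] .
    hence Dp0: "Dp \<mu> B \<noteq> 0" by auto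
    have rec2: "S (n + 2) * S n = to_fract (Dp \<mu> B)"
      using recD[of "n + 1"] n0 IH(3) by (simp add: B_def add.assoc)
    have nz2: "S (n + 2) \<noteq> 0" using rec2 Dp0 by auto
    have st: "(L (n + 2) - L n) * hh (n + 1) = of_int (2 * n + 1 + 2) \<and>
        rderiv (L (n + 2)) + rderiv (L (n + 1)) + (L (n + 2) - L (n + 1))^2 = 0"
    proof (rule step_lemma[where Lm = "L (n - 1)"])
      show "hh n = rZ + rconst \<mu> - L n - rZ * rderiv (L n)" using TL[OF n0 nz0] .
      show "hh (n + 1) = rZ + rconst \<mu> - L (n + 1) - rZ * rderiv (L (n + 1))"
        using TL[of "n + 1"] n0 nz1 by simp
      show "rderiv (hh n) = hh n * (L (n + 1) + L (n - 1) - 2 * L n)"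
        using AL[OF nz1 nzm nz0] .
      show "rderiv (hh (n + 1)) = hh (n + 1) * (L (n + 2) + L n - 2 * L (n + 1))"
        using AL[of "n + 1"] nz2 nz0 nz1 by (simp add: add.assoc)
      show "(L (n + 1) - L (n - 1)) * hh n = of_int (2 * n + 1)" using IH(4) by (simp add: Rk_def)
      show "rderiv (L (n + 1)) + rderiv (L n) + (L (n + 1) - L n)^2 = 0" using IH(5) by (simp add: Hk_def)
      show "hh n \<noteq> 0" using hh0[OF nz1 nzm nz0] .
      show "hh (n + 1) \<noteq> 0" using hh0[of "n + 1"] nz2 nz0 nz1 by (simp add: add.assoc)
    qed
    have R1: "Rk (n + 1)" using st by (simp add: Rk_def add.assoc algebra_simps)
    have H1: "Hk (n + 1)" using st by (simp add: Hk_def add.assoc)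
    have Rpoly: "rderiv (S (n + 2)) * S n - S (n + 2) * rderiv (S n) = of_int (2 * n + 3) * (S (n + 1))^2"
    proof -
      have "(L (n + 2) - L n) * hh (n + 1) = of_int (2 * n + 3)" using st by (simp add: algebra_simps)
      hence "(rderiv (S (n + 2)) / S (n + 2) - rderiv (S n) / S n) * (S (n + 2) * S n / (S (n + 1))^2)
          = of_int (2 * n + 3)"
        by (simp add: L_def hh_def add.assoc)
      moreover have "(rderiv (S (n + 2)) / S (n + 2) - rderiv (S n) / S n) * (S (n + 2) * S n / (S (n + 1))^2)
          = (rderiv (S (n + 2)) * S n - S (n + 2) * rderiv (S n)) / (S (n + 1))^2"
        using nz0 nz1 nz2 by (simp add: field_simps power2_eq_square)
      ultimately show ?thesis using nz1 by (simp add: field_simps)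
    qed
    have "rden (S (n + 2)) = 1"
    proof (rule poly_step[where A = A and E = "Dp \<mu> B" and F = "of_int (2 * n + 3) * B^2"])
      show "A \<noteq> 0" by (rule A0)
      show "S (n + 2) * to_fract A = to_fract (Dp \<mu> B)" using rec2 SA by simp
      show "rderiv (S (n + 2)) * to_fract A - S (n + 2) * to_fract (pderiv A) =
          to_fract (of_int (2 * n + 3) * B^2)"
        using Rpoly SA SB by (simp add: rderiv_to_fract to_fract_of_int power2_eq_square)
      show "poly A z = 0 \<Longrightarrow> order z A = 1" for z
        using sqA[of n z] n0 nN by (simp add: A_def)
    qed
    hence pol2: "is_polynomial (S (n + 2))" by (simp add: is_polynomial_def)
    define P where "P = rnum (S (n + 2))"
    have SP: "S (n + 2) = to_fract P" using pol2
      by (simp add: P_def is_polynomial_def rden_def rnum_def to_fract_quot_of_fract)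
    have P0: "P \<noteq> 0" using nz2 SP by auto
    have PA: "P * A = Dp \<mu> B" using rec2 SP SA by (simp flip: to_fract_mult)
    have "degree P + degree A = 2 * degree B + 1"
      using PA dDp P0 A0 by (metis degree_mult_eq)
    hence e1: "int (degree P) + int (degree A) = 2 * int (degree B) + 1" by linarith
    have eA: "2 * int (degree A) = n * (n + 1)" using IH(2) by (simp add: good_def A_def)
    have eB: "2 * int (degree B) = (n + 1) * (n + 2)" using IH(3) by (simp add: good_def B_def algebra_simps)
    have "2 * int (degree P) = (n + 2) * (n + 3)" using e1 eA eB by algebra
    hence g2: "good (n + 2)" using pol2 nz2 by (simp add: good_def P_def algebra_simps)
    have e: "int (Suc k) - 1 = n" "int (Suc k) = n + 1" "int (Suc k) + 1 = n + 2"
      by (simp_all add: n_def)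
    have e2: "n + 1 + 1 = n + 2" "n + 1 - 1 = n" by simp_all
    show ?case unfolding e(2) e2 by (intro conjI IH(2) IH(3) g2 R1 H1)
  qed
  have IN: "good (int N)" "good (int N + 1)" "good (int N - 1)" using inv[of N] by simp_all
  define P where "P = rnum (S (int N + 1))"
  define B where "B = rnum (S (int N))"
  define A where "A = rnum (S (int N - 1))"
  have part1: "is_polynomial (S (int N + 1))" using IN(2) by (simp add: good_def)
  have "2 * int (degree P) = (int N + 1) * (int N + 2)" using IN(2) by (simp add: good_def P_def algebra_simps)
  hence "int (2 * degree P) = int ((N + 1) * (N + 2))" by (simp add: algebra_simps)
  hence "2 * degree P = (N + 1) * (N + 2)" by (simp only: of_nat_eq_iff)
  hence part2: "degree P = (N + 1) * (N + 2) div 2" by simp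
  have part3: "\<not> (\<exists>z. is_root (S (int N + 1)) z \<and> is_root (S (int N)) z)"
  proof
    assume "\<exists>z. is_root (S (int N + 1)) z \<and> is_root (S (int N)) z"
    then obtain z where zP: "poly P z = 0" and zB: "poly B z = 0"
      by (auto simp: is_root_def P_def B_def)
    have z0: "z \<noteq> 0" using nonzero0[of "int N"] zB by (auto simp: is_root_def B_def)
    have rec: "S (int N + 1) * S (int N - 1) = to_fract (Dp \<mu> B)"
      using recD[of "int N"] IN(1) by (simp add: B_def)
    have e1: "to_fract P = S (int N + 1)" using polyS[OF IN(2)] by (simp add: P_def)
    have e2: "to_fract A = S (int N - 1)" using polyS[OF IN(3)] by (simp add: A_def)
    have "to_fract (P * A) = to_fract (Dp \<mu> B)" using rec by (simp only: to_fract_mult e1 e2)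
    hence "P * A = Dp \<mu> B" by (simp only: to_fract_eq_iff)
    hence "poly (Dp \<mu> B) z = 0" using zP by (metis mult_eq_0_iff poly_mult)
    hence "z * (poly (pderiv B) z)^2 = 0" using zB by (simp add: Dp_def power2_eq_square algebra_simps)
    hence dz: "poly (pderiv B) z = 0" using z0 by simp
    have B0: "B \<noteq> 0" using IN(1) polyS[OF IN(1)] by (auto simp: good_def B_def)
    have o1: "order z B = 1" using simple[of "int N" z] z0 zB by (simp add: is_root_def B_def)
    have "order z B = Suc (order z (pderiv B))" using order_pderiv[OF B0 zB] .
    hence "order z (pderiv B) = 0" using o1 by simp
    moreover have "pderiv B \<noteq> 0"
    proof
      assume "pderiv B = 0"
      then obtain h where "B = [:h:]" using pderiv_iszero by blast
      thus False using zB B0 by simp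
    qed
    ultimately show False using dz order_root by blast
  qed
  show ?thesis using part1 part2 part3 by (simp add: P_def)
qed

end
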